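(* (i) For each $k\in\mathbb{N}$ let $f_k=q_{A_k}(\cdot-a_k)+\langle b_k,\cdot\rangle+c_k$, where $A_k$ is a maximally monotone symmetric linear relation on $\mathbb{R}^n$, $a_k,b_k\in\mathbb{R}^n$, $c_k\in\mathbb{R}$. If $f_k$ epiconverges to $f$ and $f$ is proper, then $f=q_A(\cdot-a)+\langle b,\cdot\rangle+c$ for some maximally monotone symmetric linear relation $A$, $a,b\in\mathbb{R}^n$, $c\in\mathbb{R}$. (ii) For each $k$ let $f_k=q_{A_k}+c_k$ with $A_k$ a maximally monotone symmetric linear relation and $c_k\in\mathbb{R}$. If $f_k$ epiconverges to $f$ and $f$ is proper, then $f=q_A+c$ for some maximally monotone symmetric linear relation $A$ and $c\in\mathbb{R}$.
   Context: Linear relation: operator $\mathbb{R}^n\rightrightarrows\mathbb{R}^n$ with linear-subspace graph; monotone, maximally monotone and symmetric ($\langle x,y^*\rangle=\langle y,x^*\rangle$ on the graph) as usual. $q_A(x)=\frac12\langle x,Ax\rangle$ on $\operatorname{dom}A$, $\infty$ elsewhere. Epiconvergence means Painlevé–Kuratowski convergence of epigraphs. *)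

theory Defs
  imports "HOL-Analysis.Analysis"
begin

text \<open>A (set-valued) operator on R^n is represented by its graph, a set of pairs.\<close>

definition linear_relation :: "((real^('n::finite)) \<times> (real^'n)) set \<Rightarrow> bool" where
  "linear_relation A \<longleftrightarrow> subspace A"

definition monotone_op :: "((real^('n::finite)) \<times> (real^'n)) set \<Rightarrow> bool" where
  "monotone_op A \<longleftrightarrow> (\<forall>x x' y y'. (x, x') \<in> A \<longrightarrow> (y, y') \<in> A \<longrightarrow> inner (x - y) (x' - y') \<ge> 0)"

definition maximally_monotone :: "((real^('n::finite)) \<times> (real^'n)) set \<Rightarrow> bool" where
  "maximally_monotone A \<longleftrightarrow> monotone_op A \<and> (\<forall>B. monotone_op B \<and> A \<subseteq> B \<longrightarrow> B = A)"

definition symmetric_op :: "((real^('n::finite)) \<times> (real^'n)) set \<Rightarrow> bool" where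
  "symmetric_op A \<longleftrightarrow> (\<forall>x x' y y'. (x, x') \<in> A \<longrightarrow> (y, y') \<in> A \<longrightarrow> inner x y' = inner y x')"

text \<open>q_A(x) = 1/2 <x, Ax> on dom A, +\<infinity> elsewhere (well defined for symmetric A).\<close>
definition qA :: "((real^('n::finite)) \<times> (real^'n)) set \<Rightarrow> (real^'n) \<Rightarrow> ereal" where
  "qA A x = (if x \<in> Domain A then ereal (inner x (SOME y. (x, y) \<in> A) / 2) else \<infinity>)"

definition epigraph :: "('a \<Rightarrow> ereal) \<Rightarrow> ('a \<times> real) set" where
  "epigraph f = {(x, t). f x \<le> ereal t}"

definition PK_liminf :: "(nat \<Rightarrow> 'a::metric_space set) \<Rightarrow> 'a set" where
  "PK_liminf C = {z. \<forall>e>0. eventually (\<lambda>k. \<exists>y\<in>C k. dist y z < e) sequentially}"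

definition PK_limsup :: "(nat \<Rightarrow> 'a::metric_space set) \<Rightarrow> 'a set" where
  "PK_limsup C = {z. \<forall>e>0. frequently (\<lambda>k. \<exists>y\<in>C k. dist y z < e) sequentially}"

definition PK_converges :: "(nat \<Rightarrow> 'a::metric_space set) \<Rightarrow> 'a set \<Rightarrow> bool" where
  "PK_converges C D \<longleftrightarrow> PK_liminf C = D \<and> PK_limsup C = D"

definition epiconverges :: "(nat \<Rightarrow> 'a::metric_space \<Rightarrow> ereal) \<Rightarrow> ('a \<Rightarrow> ereal) \<Rightarrow> bool" where
  "epiconverges F f \<longleftrightarrow> PK_converges (\<lambda>k. epigraph (F k)) (epigraph f)"

definition proper_fun :: "('a \<Rightarrow> ereal) \<Rightarrow> bool" where
  "proper_fun f \<longleftrightarrow> (\<forall>x. f x \<noteq> -\<infinity>) \<and> (\<exists>x. f x \<noteq> \<infinity>)"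

definition mms_relation :: "((real^('n::finite)) \<times> (real^'n)) set \<Rightarrow> bool" where
  "mms_relation A \<longleftrightarrow> linear_relation A \<and> maximally_monotone A \<and> symmetric_op A"

end

theory Submission
  imports Defs
begin

lemma infdist_approx:
  assumes "A \<noteq> {}" "e > 0"
  shows "\<exists>a\<in>A. dist x a < infdist x A + e"
proof -
  have "(INF a\<in>A. dist x a) < infdist x A + e" using assms infdist_notempty[of A x] by simp
  moreover have "bdd_below ((\<lambda>a. dist x a) ` A)" by (rule bdd_belowI[of _ 0]) auto
  ultimately show ?thesis using assms(1) by (simp add: cINF_less_iff)
qed

lemma epi_lb:
  fixes F :: "nat \<Rightarrow> 'a::metric_space \<Rightarrow> ereal"
  assumes epi: "epiconverges F f" and Z: "Z \<longlonglongrightarrow> z" and r: "r \<longlonglongrightarrow> \<rho>"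
    and fr: "frequently (\<lambda>k. F k (Z k) \<le> ereal (r k)) sequentially"
  shows "f z \<le> ereal \<rho>"
proof -
  have "(z, \<rho>) \<in> PK_limsup (\<lambda>k. epigraph (F k))"
    unfolding PK_limsup_def
  proof (safe)
    fix e :: real assume e: "e > 0"
    have "(\<lambda>k. (Z k, r k)) \<longlonglongrightarrow> (z, \<rho>)" using Z r by (rule tendsto_Pair)
    then have ev: "eventually (\<lambda>k. dist (Z k, r k) (z, \<rho>) < e) sequentially"
      using e tendstoD by blast
    show "frequently (\<lambda>k. \<exists>y\<in>epigraph (F k). dist y (z, \<rho>) < e) sequentially"
      using frequently_eventually_frequently[OF fr ev]
      by (rule frequently_elim1) (auto simp: epigraph_def)
  qed
  then show ?thesis using epi by (auto simp: epiconverges_def PK_converges_def epigraph_def)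
qed

lemma epi_lbe:
  fixes F :: "nat \<Rightarrow> 'a::metric_space \<Rightarrow> ereal"
  assumes epi: "epiconverges F f" and Z: "Z \<longlonglongrightarrow> z" and lt: "ereal \<rho> < f z"
  shows "eventually (\<lambda>k. ereal \<rho> < F k (Z k)) sequentially"
proof (rule ccontr)
  assume "\<not> ?thesis"
  then have "frequently (\<lambda>k. F k (Z k) \<le> ereal \<rho>) sequentially"
    by (simp add: not_eventually not_less)
  then have "f z \<le> ereal \<rho>" using epi_lb[OF epi Z tendsto_const] by blast
  with lt show False by simp
qed

lemma epi_rec:
  fixes F :: "nat \<Rightarrow> 'a::metric_space \<Rightarrow> ereal"
  assumes epi: "epiconverges F f" and fx: "f x = ereal v" and nm: "\<And>k y. F k y \<noteq> -\<infinity>"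
  shows "\<exists>X a. X \<longlonglongrightarrow> x \<and> a \<longlonglongrightarrow> v \<and> eventually (\<lambda>k. F k (X k) = ereal (a k)) sequentially"
proof -
  define C where "C k = epigraph (F k)" for k
  have "(x, v) \<in> PK_liminf C"
    using epi fx unfolding C_def by (auto simp: epiconverges_def PK_converges_def epigraph_def)
  then have ev: "\<And>e. e > 0 \<Longrightarrow> eventually (\<lambda>k. \<exists>y\<in>C k. dist y (x, v) < e) sequentially"
    unfolding PK_liminf_def by auto
  have ne: "eventually (\<lambda>k. C k \<noteq> {}) sequentially"
    using ev[of 1] by (rule eventually_mono) auto
  define D where "D k = infdist (x, v) (C k)" for k
  have D0: "D \<longlonglongrightarrow> 0"
  proof (rule tendstoI)
    fix e :: real assume "e > 0"
    show "eventually (\<lambda>k. dist (D k) 0 < e) sequentially"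
      using ev[OF \<open>e > 0\<close>]
    proof (rule eventually_mono)
      fix k assume "\<exists>y\<in>C k. dist y (x, v) < e"
      then obtain y where "y \<in> C k" "dist y (x,v) < e" by blast
      then have "D k \<le> dist (x,v) y" unfolding D_def by (simp add: infdist_le)
      then show "dist (D k) 0 < e" using \<open>dist y (x,v) < e\<close> infdist_nonneg[of "(x,v)" "C k"]
        by (simp add: D_def dist_commute)
    qed
  qed
  define P where "P k = (if C k = {} then (x, v) else SOME p. p \<in> C k \<and> dist (x,v) p < D k + 1 / (real k + 1))" for k
  have P: "C k \<noteq> {} \<Longrightarrow> P k \<in> C k \<and> dist (x,v) (P k) < D k + 1 / (real k + 1)" for k
  proof -
    assume "C k \<noteq> {}"
    then have "\<exists>p. p \<in> C k \<and> dist (x,v) p < D k + 1 / (real k + 1)"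
      using infdist_approx[of "C k" "1 / (real k + 1)" "(x,v)"] by (auto simp: D_def)
    from someI_ex[OF this] show ?thesis using \<open>C k \<noteq> {}\<close> unfolding P_def by simp
  qed
  have Pl: "P \<longlonglongrightarrow> (x, v)"
  proof (rule tendstoI)
    fix e :: real assume e: "e > 0"
    have "(\<lambda>k. D k + 1 / (real k + 1)) \<longlonglongrightarrow> 0 + 0"
      by (intro tendsto_add D0) (use LIMSEQ_inverse_real_of_nat in \<open>simp add: inverse_eq_divide add.commute\<close>)
    from tendstoD[OF this e] have "eventually (\<lambda>k. dist (D k + 1 / (real k + 1)) 0 < e) sequentially"
      by simp
    then show "eventually (\<lambda>k. dist (P k) (x, v) < e) sequentially"
      using ne
    proof (eventually_elim)
      case (elim k)
      then show ?case using P[of k] by (simp add: dist_commute) linarith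
    qed
  qed
  define X where "X k = fst (P k)" for k
  define r where "r k = snd (P k)" for k
  have X: "X \<longlonglongrightarrow> x" unfolding X_def using tendsto_fst[OF Pl] by simp
  have r: "r \<longlonglongrightarrow> v" unfolding r_def using tendsto_snd[OF Pl] by simp
  have le: "eventually (\<lambda>k. F k (X k) \<le> ereal (r k)) sequentially"
  proof (rule eventually_mono[OF ne])
    fix k assume "C k \<noteq> {}"
    then have "P k \<in> C k" using P by blast
    then show "F k (X k) \<le> ereal (r k)" by (cases "P k") (auto simp: C_def epigraph_def X_def r_def)
  qed
  define a where "a k = real_of_ereal (F k (X k))" for k
  have eqa: "eventually (\<lambda>k. F k (X k) = ereal (a k)) sequentially"
    using le
  proof (rule eventually_mono)
    fix k assume "F k (X k) \<le> ereal (r k)"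
    then show "F k (X k) = ereal (a k)" using nm[of k "X k"] unfolding a_def
      by (cases "F k (X k)") auto
  qed
  have "a \<longlonglongrightarrow> v"
  proof (rule tendstoI)
    fix e :: real assume e: "e > 0"
    have e1: "eventually (\<lambda>k. ereal (v - e) < F k (X k)) sequentially"
      by (rule epi_lbe[OF epi X]) (use e fx in simp)
    have e2: "eventually (\<lambda>k. dist (r k) v < e) sequentially" using r e tendstoD by blast
    show "eventually (\<lambda>k. dist (a k) v < e) sequentially"
      using e1 e2 le eqa
    proof (eventually_elim)
      case (elim k)
      then show ?case by (auto simp: dist_real_def)
    qed
  qed
  then show ?thesis using X eqa by blast
qed

definition Hcond :: "(real \<Rightarrow> real) \<Rightarrow> bool" where
  "Hcond \<phi> \<longleftrightarrow> (\<forall>a b u w. a < b \<longrightarrow> a < u \<longrightarrow> u < b \<longrightarrow> (w < a \<or> b < w) \<longrightarrow>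
     (u-a)*(b-u)*((b-a)*\<phi> w - (b-w)*\<phi> a - (w-a)*\<phi> b)
   + (w-a)*(w-b)*((b-a)*\<phi> u - (b-u)*\<phi> a - (u-a)*\<phi> b) \<le> 0)"

lemma core1d:
  assumes H: "Hcond \<phi>"
  shows "\<phi> t = \<phi> 0 + t * (\<phi> 1 - \<phi> 0) + t * (t - 1) * (\<phi> 0 - 2 * \<phi> 1 + \<phi> 2) / 2"
proof -
  define X where "X = \<phi> t - (\<phi> 0 + t * (\<phi> 1 - \<phi> 0) + t * (t - 1) * (\<phi> 0 - 2 * \<phi> 1 + \<phi> 2) / 2)"
  have Ht: "\<phi> t = (\<phi> 0 + t * (\<phi> 1 - \<phi> 0) + t * (t - 1) * (\<phi> 0 - 2 * \<phi> 1 + \<phi> 2) / 2) + X"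
    unfolding X_def by simp
  have Hi: "\<And>a b u w. a < b \<Longrightarrow> a < u \<Longrightarrow> u < b \<Longrightarrow> (w < a \<or> b < w) \<Longrightarrow>
     (u-a)*(b-u)*((b-a)*\<phi> w - (b-w)*\<phi> a - (w-a)*\<phi> b)
   + (w-a)*(w-b)*((b-a)*\<phi> u - (b-u)*\<phi> a - (u-a)*\<phi> b) \<le> 0"
    using H unfolding Hcond_def by blast
  have "X = 0"
  proof (cases "t = 0 \<or> t = 1 \<or> t = 2")
    case True then show ?thesis unfolding X_def by (auto simp: field_simps)
  next
    case False
    then consider "t < 0" | "0 < t" "t < 1" | "1 < t" "t < 2" | "2 < t" by linarith
    then show ?thesis
    proof cases
      case 1
      have i1: "(0-t)*(1-0)*((1-t)*\<phi> 2 - (1-2)*\<phi> t - (2-t)*\<phi> 1)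
        + (2-t)*(2-1)*((1-t)*\<phi> 0 - (1-0)*\<phi> t - (0-t)*\<phi> 1) \<le> 0"
        by (rule Hi) (use 1 in auto)
      have i2: "(1-0)*(2-1)*((2-0)*\<phi> t - (2-t)*\<phi> 0 - (t-0)*\<phi> 2)
        + (t-0)*(t-2)*((2-0)*\<phi> 1 - (2-1)*\<phi> 0 - (1-0)*\<phi> 2) \<le> 0"
        by (rule Hi) (use 1 in auto)
      have e1: "(0-t)*(1-0)*((1-t)*\<phi> 2 - (1-2)*\<phi> t - (2-t)*\<phi> 1)
        + (2-t)*(2-1)*((1-t)*\<phi> 0 - (1-0)*\<phi> t - (0-t)*\<phi> 1) = -2 * X"
        unfolding Ht by (simp add: field_simps)
      have e2: "(1-0)*(2-1)*((2-0)*\<phi> t - (2-t)*\<phi> 0 - (t-0)*\<phi> 2)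
        + (t-0)*(t-2)*((2-0)*\<phi> 1 - (2-1)*\<phi> 0 - (1-0)*\<phi> 2) = 2 * X"
        unfolding Ht by (simp add: field_simps)
      show ?thesis using i1 i2 e1 e2 by linarith
    next
      case 2
      have i1: "(t-0)*(1-t)*((1-0)*\<phi> 2 - (1-2)*\<phi> 0 - (2-0)*\<phi> 1)
        + (2-0)*(2-1)*((1-0)*\<phi> t - (1-t)*\<phi> 0 - (t-0)*\<phi> 1) \<le> 0"
        by (rule Hi) (use 2 in auto)
      have i2: "(1-t)*(2-1)*((2-t)*\<phi> 0 - (2-0)*\<phi> t - (0-t)*\<phi> 2)
        + (0-t)*(0-2)*((2-t)*\<phi> 1 - (2-1)*\<phi> t - (1-t)*\<phi> 2) \<le> 0"
        by (rule Hi) (use 2 in auto)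
      have e1: "(t-0)*(1-t)*((1-0)*\<phi> 2 - (1-2)*\<phi> 0 - (2-0)*\<phi> 1)
        + (2-0)*(2-1)*((1-0)*\<phi> t - (1-t)*\<phi> 0 - (t-0)*\<phi> 1) = 2 * X"
        unfolding Ht by (simp add: field_simps)
      have e2: "(1-t)*(2-1)*((2-t)*\<phi> 0 - (2-0)*\<phi> t - (0-t)*\<phi> 2)
        + (0-t)*(0-2)*((2-t)*\<phi> 1 - (2-1)*\<phi> t - (1-t)*\<phi> 2) = -2 * X"
        unfolding Ht by (simp add: field_simps)
      show ?thesis using i1 i2 e1 e2 by linarith
    next
      case 3
      have i1: "(1-0)*(t-1)*((t-0)*\<phi> 2 - (t-2)*\<phi> 0 - (2-0)*\<phi> t)
        + (2-0)*(2-t)*((t-0)*\<phi> 1 - (t-1)*\<phi> 0 - (1-0)*\<phi> t) \<le> 0"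
        by (rule Hi) (use 3 in auto)
      have i2: "(t-1)*(2-t)*((2-1)*\<phi> 0 - (2-0)*\<phi> 1 - (0-1)*\<phi> 2)
        + (0-1)*(0-2)*((2-1)*\<phi> t - (2-t)*\<phi> 1 - (t-1)*\<phi> 2) \<le> 0"
        by (rule Hi) (use 3 in auto)
      have e1: "(1-0)*(t-1)*((t-0)*\<phi> 2 - (t-2)*\<phi> 0 - (2-0)*\<phi> t)
        + (2-0)*(2-t)*((t-0)*\<phi> 1 - (t-1)*\<phi> 0 - (1-0)*\<phi> t) = -2 * X"
        unfolding Ht by (simp add: field_simps)
      have e2: "(t-1)*(2-t)*((2-1)*\<phi> 0 - (2-0)*\<phi> 1 - (0-1)*\<phi> 2)
        + (0-1)*(0-2)*((2-1)*\<phi> t - (2-t)*\<phi> 1 - (t-1)*\<phi> 2) = 2 * X"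
        unfolding Ht by (simp add: field_simps)
      show ?thesis using i1 i2 e1 e2 by linarith
    next
      case 4
      have i1: "(1-0)*(2-1)*((2-0)*\<phi> t - (2-t)*\<phi> 0 - (t-0)*\<phi> 2)
        + (t-0)*(t-2)*((2-0)*\<phi> 1 - (2-1)*\<phi> 0 - (1-0)*\<phi> 2) \<le> 0"
        by (rule Hi) (use 4 in auto)
      have i2: "(2-1)*(t-2)*((t-1)*\<phi> 0 - (t-0)*\<phi> 1 - (0-1)*\<phi> t)
        + (0-1)*(0-t)*((t-1)*\<phi> 2 - (t-2)*\<phi> 1 - (2-1)*\<phi> t) \<le> 0"
        by (rule Hi) (use 4 in auto)
      have e1: "(1-0)*(2-1)*((2-0)*\<phi> t - (2-t)*\<phi> 0 - (t-0)*\<phi> 2)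
        + (t-0)*(t-2)*((2-0)*\<phi> 1 - (2-1)*\<phi> 0 - (1-0)*\<phi> 2) = 2 * X"
        unfolding Ht by (simp add: field_simps)
      have e2: "(2-1)*(t-2)*((t-1)*\<phi> 0 - (t-0)*\<phi> 1 - (0-1)*\<phi> t)
        + (0-1)*(0-t)*((t-1)*\<phi> 2 - (t-2)*\<phi> 1 - (2-1)*\<phi> t) = -2 * X"
        unfolding Ht by (simp add: field_simps)
      show ?thesis using i1 i2 e1 e2 by linarith
    qed
  qed
  then show ?thesis using Ht by simp
qed

definition gqf :: "('a::real_vector \<Rightarrow> ereal) \<Rightarrow> ('a \<Rightarrow> real) \<Rightarrow> bool" where
  "gqf G Q \<longleftrightarrow> (\<forall>x. G x \<noteq> -\<infinity>) \<and> (\<forall>d. 0 \<le> Q d) \<and>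
     (\<forall>X Y s. G X \<noteq> \<infinity> \<longrightarrow> G Y \<noteq> \<infinity> \<longrightarrow>
        G (X + s *\<^sub>R (Y - X)) = ereal ((1-s) * real_of_ereal (G X) + s * real_of_ereal (G Y) + (s * s - s) * Q (Y - X)))"

locale epi_gq =
  fixes F :: "nat \<Rightarrow> 'a::real_normed_vector \<Rightarrow> ereal" and Q :: "nat \<Rightarrow> 'a \<Rightarrow> real" and f :: "'a \<Rightarrow> ereal"
  assumes gq: "\<And>k. gqf (F k) (Q k)" and epi: "epiconverges F f" and prp: "proper_fun f"
begin

definition rf :: "'a \<Rightarrow> real" where "rf x = real_of_ereal (f x)"

lemma f_nm: "f x \<noteq> -\<infinity>" using prp by (auto simp: proper_fun_def)

lemma f_eq: "f x \<noteq> \<infinity> \<Longrightarrow> f x = ereal (rf x)"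
  using f_nm[of x] unfolding rf_def by (cases "f x") auto

lemma F_nm: "F k y \<noteq> -\<infinity>" using gq[of k] by (auto simp: gqf_def)
lemma Q_nn: "0 \<le> Q k d" using gq[of k] by (auto simp: gqf_def)
lemma F_line: "F k X \<noteq> \<infinity> \<Longrightarrow> F k Y \<noteq> \<infinity> \<Longrightarrow>
   F k (X + s *\<^sub>R (Y - X)) = ereal ((1-s) * real_of_ereal (F k X) + s * real_of_ereal (F k Y) + (s * s - s) * Q k (Y - X))"
  using gq[of k] by (auto simp: gqf_def)

definition isrec :: "(nat \<Rightarrow> 'a) \<Rightarrow> 'a \<Rightarrow> (nat \<Rightarrow> real) \<Rightarrow> bool" where
  "isrec X x a \<longleftrightarrow> X \<longlonglongrightarrow> x \<and> a \<longlonglongrightarrow> rf x \<and> f x \<noteq> \<infinity> \<and> eventually (\<lambda>k. F k (X k) = ereal (a k)) sequentially"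

lemma rec_ex: assumes "f x \<noteq> \<infinity>" shows "\<exists>X a. isrec X x a"
  using epi_rec[OF epi f_eq[OF assms] F_nm] assms unfolding isrec_def by blast

lemma line_ev:
  assumes "isrec X x a" "isrec Y y b"
  shows "eventually (\<lambda>k. \<forall>s. F k (X k + s *\<^sub>R (Y k - X k)) = ereal ((1-s) * a k + s * b k + (s * s - s) * Q k (Y k - X k))) sequentially"
proof -
  have "eventually (\<lambda>k. F k (X k) = ereal (a k)) sequentially" "eventually (\<lambda>k. F k (Y k) = ereal (b k)) sequentially"
    using assms unfolding isrec_def by auto
  then show ?thesis
  proof eventually_elim
    case (elim k) then show ?case using F_line[of k "X k" "Y k"] by simp
  qed
qed

lemma Zlim:
  fixes X Y :: "nat \<Rightarrow> 'a"
  assumes "X \<longlonglongrightarrow> x" "Y \<longlonglongrightarrow> y"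
  shows "(\<lambda>k. X k + s *\<^sub>R (Y k - X k)) \<longlonglongrightarrow> x + s *\<^sub>R (y - x)"
  using assms by (intro tendsto_add tendsto_scaleR tendsto_diff tendsto_const)

lemma fin_inside:
  assumes X: "isrec X x a" and Y: "isrec Y y b" and s: "0 \<le> s" "s \<le> 1"
  shows "f (x + s *\<^sub>R (y - x)) \<le> ereal ((1-s) * rf x + s * rf y)"
proof (rule epi_lb[OF epi])
  show "(\<lambda>k. X k + s *\<^sub>R (Y k - X k)) \<longlonglongrightarrow> x + s *\<^sub>R (y - x)"
    using X Y unfolding isrec_def by (intro Zlim) auto
  show "(\<lambda>k. (1-s) * a k + s * b k) \<longlonglongrightarrow> (1-s) * rf x + s * rf y"
    using X Y unfolding isrec_def by (intro tendsto_intros) auto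
  have "eventually (\<lambda>k. F k (X k + s *\<^sub>R (Y k - X k)) \<le> ereal ((1-s) * a k + s * b k)) sequentially"
    using line_ev[OF X Y]
  proof (rule eventually_mono)
    fix k assume "\<forall>s. F k (X k + s *\<^sub>R (Y k - X k)) = ereal ((1-s) * a k + s * b k + (s * s - s) * Q k (Y k - X k))"
    moreover have "(s * s - s) * Q k (Y k - X k) \<le> 0"
      using s Q_nn[of k "Y k - X k"] by (intro mult_nonpos_nonneg) (auto simp: algebra_simps mult_le_cancel_right1 intro: mult_left_le_one_le)
    ultimately show "F k (X k + s *\<^sub>R (Y k - X k)) \<le> ereal ((1-s) * a k + s * b k)" by simp
  qed
  then show "frequently (\<lambda>k. F k (X k + s *\<^sub>R (Y k - X k)) \<le> ereal ((1-s) * a k + s * b k)) sequentially"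
    by (simp add: eventually_frequently)
qed

lemma contra2:
  assumes Z: "Z \<longlonglongrightarrow> z" and Z': "Z' \<longlonglongrightarrow> z'"
    and u: "eventually (\<lambda>k. F k (Z k) = ereal (u k)) sequentially"
    and w: "eventually (\<lambda>k. F k (Z' k) = ereal (w k)) sequentially"
    and lm: "lam > 0" "mu > 0"
    and R: "eventually (\<lambda>k. lam * w k + mu * u k = R k) sequentially" "R \<longlonglongrightarrow> R0"
    and r1: "ereal \<rho>1 < f z'" and r2: "ereal \<rho>2 < f z" and gt: "lam * \<rho>1 + mu * \<rho>2 > R0"
  shows False
proof -
  have e1: "eventually (\<lambda>k. ereal \<rho>1 < F k (Z' k)) sequentially" by (rule epi_lbe[OF epi Z' r1])
  have e2: "eventually (\<lambda>k. ereal \<rho>2 < F k (Z k)) sequentially" by (rule epi_lbe[OF epi Z r2])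
  have e3: "eventually (\<lambda>k. R k < lam * \<rho>1 + mu * \<rho>2) sequentially"
    using R(2) gt by (rule order_tendstoD)
  have "eventually (\<lambda>k. False) sequentially"
    using e1 e2 e3 u w R(1)
  proof eventually_elim
    case (elim k)
    then have "\<rho>1 < w k" "\<rho>2 < u k" by auto
    then have "lam * \<rho>1 < lam * w k" "mu * \<rho>2 < mu * u k" using lm by auto
    then show False using elim by linarith
  qed
  then show False by simp
qed

lemma BL:
  assumes X: "isrec X x a" and Y: "isrec Y y b" and s: "0 < s" "s < 1" and s': "s' < 0 \<or> 1 < s'"
  shows "f (x + s' *\<^sub>R (y - x)) \<noteq> \<infinity> \<and>
    s * (1-s) * rf (x + s' *\<^sub>R (y - x)) + s' * (s'-1) * rf (x + s *\<^sub>R (y - x))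
      \<le> s * (1-s) * ((1-s') * rf x + s' * rf y) + s' * (s'-1) * ((1-s) * rf x + s * rf y)"
proof -
  define lam where "lam = s * (1-s)"
  define mu where "mu = s' * (s'-1)"
  have lm: "lam > 0" "mu > 0" unfolding lam_def mu_def using s s'
    by (auto simp: mult_pos_pos mult_neg_neg)
  define z where "z = x + s *\<^sub>R (y - x)"
  define z' where "z' = x + s' *\<^sub>R (y - x)"
  define Z where "Z k = X k + s *\<^sub>R (Y k - X k)" for k
  define Z' where "Z' k = X k + s' *\<^sub>R (Y k - X k)" for k
  define \<kappa> where "\<kappa> k = Q k (Y k - X k)" for k
  define u where "u k = (1-s) * a k + s * b k + (s * s - s) * \<kappa> k" for k
  define w where "w k = (1-s') * a k + s' * b k + (s' * s' - s') * \<kappa> k" for k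
  define R where "R k = lam * ((1-s') * a k + s' * b k) + mu * ((1-s) * a k + s * b k)" for k
  define R0 where "R0 = lam * ((1-s') * rf x + s' * rf y) + mu * ((1-s) * rf x + s * rf y)"
  have Zl: "Z \<longlonglongrightarrow> z" "Z' \<longlonglongrightarrow> z'" using X Y unfolding isrec_def Z_def Z'_def z_def z'_def
    by (auto intro: Zlim)
  have ev: "eventually (\<lambda>k. F k (Z k) = ereal (u k)) sequentially" "eventually (\<lambda>k. F k (Z' k) = ereal (w k)) sequentially"
    using line_ev[OF X Y] unfolding Z_def Z'_def u_def w_def \<kappa>_def by (auto elim: eventually_mono)
  have Req: "eventually (\<lambda>k. lam * w k + mu * u k = R k) sequentially"
    by (rule always_eventually) (simp add: w_def u_def R_def lam_def mu_def algebra_simps)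
  have Rl: "R \<longlonglongrightarrow> R0" using X Y unfolding R_def R0_def isrec_def by (intro tendsto_intros) auto
  have fz: "f z \<le> ereal ((1-s) * rf x + s * rf y)" unfolding z_def using fin_inside[OF X Y] s by auto
  then have fzf: "f z \<noteq> \<infinity>" by auto
  have fz'f: "f z' \<noteq> \<infinity>"
  proof
    assume inf: "f z' = \<infinity>"
    define \<rho>2 where "\<rho>2 = rf z - 1"
    define \<rho>1 where "\<rho>1 = (R0 + 1 - mu * \<rho>2) / lam"
    show False
    proof (rule contra2[OF Zl ev lm Req Rl])
      show "ereal \<rho>1 < f z'" using inf by simp
      show "ereal \<rho>2 < f z" using f_eq[OF fzf] by (simp add: \<rho>2_def)
      show "lam * \<rho>1 + mu * \<rho>2 > R0" using lm by (simp add: \<rho>1_def)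
    qed
  qed
  have "lam * rf z' + mu * rf z \<le> R0"
  proof (rule ccontr)
    assume "\<not> ?thesis"
    then have g: "lam * rf z' + mu * rf z - R0 > 0" by simp
    define \<delta> where "\<delta> = (lam * rf z' + mu * rf z - R0) / (2 * (lam + mu))"
    have \<delta>: "\<delta> > 0" unfolding \<delta>_def using g lm by simp
    have \<delta>e: "(lam + mu) * \<delta> = (lam * rf z' + mu * rf z - R0) / 2" unfolding \<delta>_def using lm by (simp add: field_simps)
    show False
    proof (rule contra2[OF Zl ev lm Req Rl])
      show "ereal (rf z' - \<delta>) < f z'" using f_eq[OF fz'f] \<delta> by simp
      show "ereal (rf z - \<delta>) < f z" using f_eq[OF fzf] \<delta> by simp
      show "lam * (rf z' - \<delta>) + mu * (rf z - \<delta>) > R0" using \<delta>e g by (simp add: algebra_simps)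
    qed
  qed
  then show ?thesis using fz'f unfolding lam_def mu_def R0_def z_def z'_def by simp
qed

lemma dom_affine:
  assumes "f x \<noteq> \<infinity>" "f y \<noteq> \<infinity>"
  shows "f (x + t *\<^sub>R (y - x)) \<noteq> \<infinity>"
proof -
  obtain X a where X: "isrec X x a" using rec_ex assms by blast
  obtain Y b where Y: "isrec Y y b" using rec_ex assms by blast
  show ?thesis
  proof (cases "0 \<le> t \<and> t \<le> 1")
    case True then show ?thesis using fin_inside[OF X Y, of t] by auto
  next
    case False then show ?thesis using BL[OF X Y, of "1/2" t] by auto
  qed
qed

end

lemma line_pt: "(x::'b::real_vector) + a *\<^sub>R (y - x) + s *\<^sub>R ((x + b *\<^sub>R (y - x)) - (x + a *\<^sub>R (y - x))) = x + (a + s * (b - a)) *\<^sub>R (y - x)"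
proof -
  have "(x + b *\<^sub>R (y - x)) - (x + a *\<^sub>R (y - x)) = (b - a) *\<^sub>R (y - x)" by (simp add: algebra_simps)
  then show ?thesis by (simp add: scaleR_add_left add.assoc)
qed

context epi_gq begin

lemma Hpoly:
  assumes fx: "f x \<noteq> \<infinity>" and fy: "f y \<noteq> \<infinity>"
  shows "Hcond (\<lambda>t. rf (x + t *\<^sub>R (y - x)))"
  unfolding Hcond_def
proof (intro allI impI)
  fix a b u w :: real
  assume ab: "a < b" and au: "a < u" and ub: "u < b" and w: "w < a \<or> b < w"
  define \<phi> where "\<phi> t = rf (x + t *\<^sub>R (y - x))" for t
  define x' where "x' = x + a *\<^sub>R (y - x)"
  define y' where "y' = x + b *\<^sub>R (y - x)"
  have fx': "f x' \<noteq> \<infinity>" "f y' \<noteq> \<infinity>" unfolding x'_def y'_def using dom_affine fx fy by auto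
  obtain X c where X: "isrec X x' c" using rec_ex fx' by blast
  obtain Y d where Y: "isrec Y y' d" using rec_ex fx' by blast
  define D where "D = b - a"
  have D: "D > 0" using ab by (simp add: D_def)
  define s where "s = (u - a) / D"
  define s' where "s' = (w - a) / D"
  have s: "0 < s" "s < 1" using au ub D by (auto simp: s_def D_def field_simps)
  have s': "s' < 0 \<or> 1 < s'" using w D by (auto simp: s'_def D_def field_simps)
  have hs: "a + s * (b - a) = u" "a + s' * (b - a) = w" using D by (auto simp: s_def s'_def D_def)
  have pu: "x' + s *\<^sub>R (y' - x') = x + u *\<^sub>R (y - x)"
    unfolding x'_def y'_def line_pt hs ..
  have pw: "x' + s' *\<^sub>R (y' - x') = x + w *\<^sub>R (y - x)"
    unfolding x'_def y'_def line_pt hs ..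
  have B: "s * (1-s) * \<phi> w + s' * (s'-1) * \<phi> u
      \<le> s * (1-s) * ((1-s') * \<phi> a + s' * \<phi> b) + s' * (s'-1) * ((1-s) * \<phi> a + s * \<phi> b)"
    using BL[OF X Y s s'] unfolding pu pw by (simp add: \<phi>_def x'_def y'_def)
  have h1: "u - a = s * D" "b - u = (1-s) * D" "w - a = s' * D" "w - b = (s'-1) * D" "b - w = (1-s') * D" "b - a = D"
    using D by (auto simp: s_def s'_def D_def field_simps)
  have eq: "(s * D) * ((1-s) * D) * (D * \<phi> w - ((1-s') * D) * \<phi> a - (s' * D) * \<phi> b)
   + (s' * D) * ((s'-1) * D) * (D * \<phi> u - ((1-s) * D) * \<phi> a - (s * D) * \<phi> b)
   = D^3 * ((s * (1-s) * \<phi> w + s' * (s'-1) * \<phi> u) -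
       (s * (1-s) * ((1-s') * \<phi> a + s' * \<phi> b) + s' * (s'-1) * ((1-s) * \<phi> a + s * \<phi> b)))"
    by (simp add: algebra_simps power3_eq_cube)
  have "D^3 * ((s * (1-s) * \<phi> w + s' * (s'-1) * \<phi> u) -
       (s * (1-s) * ((1-s') * \<phi> a + s' * \<phi> b) + s' * (s'-1) * ((1-s) * \<phi> a + s * \<phi> b))) \<le> 0"
    using B D by (intro mult_nonneg_nonpos) auto
  then show "(u-a) * (b-u) * ((b-a) * rf (x + w *\<^sub>R (y - x)) - (b-w) * rf (x + a *\<^sub>R (y - x)) - (w-a) * rf (x + b *\<^sub>R (y - x)))
   + (w-a) * (w-b) * ((b-a) * rf (x + u *\<^sub>R (y - x)) - (b-u) * rf (x + a *\<^sub>R (y - x)) - (u-a) * rf (x + b *\<^sub>R (y - x))) \<le> 0"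
    using eq unfolding h1 \<phi>_def by simp
qed

definition K :: "'a \<Rightarrow> 'a \<Rightarrow> real" where
  "K x y = (rf x - 2 * rf y + rf (x + 2 *\<^sub>R (y - x))) / 2"

lemma line_quad:
  assumes fx: "f x \<noteq> \<infinity>" and fy: "f y \<noteq> \<infinity>"
  shows "rf (x + t *\<^sub>R (y - x)) = (1-t) * rf x + t * rf y + (t * t - t) * K x y"
  using core1d[OF Hpoly[OF fx fy], of t] unfolding K_def by (simp add: algebra_simps)

lemma kappa_conv:
  assumes X: "isrec X x a" and Y: "isrec Y y b"
  shows "(\<lambda>k. Q k (Y k - X k)) \<longlonglongrightarrow> K x y"
proof (rule tendstoI)
  fix e :: real assume e: "e > 0"
  have fx: "f x \<noteq> \<infinity>" and fy: "f y \<noteq> \<infinity>" using X Y by (auto simp: isrec_def)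
  define zh where "zh = x + (1/2) *\<^sub>R (y - x)"
  define z2 where "z2 = x + 2 *\<^sub>R (y - x)"
  have fzh: "f zh \<noteq> \<infinity>" "f z2 \<noteq> \<infinity>" unfolding zh_def z2_def using dom_affine fx fy by auto
  have rzh: "rf zh = (1/2) * rf x + (1/2) * rf y - (1/4) * K x y"
    unfolding zh_def using line_quad[OF fx fy, of "1/2"] by simp
  have rz2: "rf z2 = - rf x + 2 * rf y + 2 * K x y"
    unfolding z2_def using line_quad[OF fx fy, of 2] by simp
  have Xl: "X \<longlonglongrightarrow> x" and Yl: "Y \<longlonglongrightarrow> y" and al: "a \<longlonglongrightarrow> rf x" and bl: "b \<longlonglongrightarrow> rf y"
    using X Y by (auto simp: isrec_def)
  have e1: "eventually (\<lambda>k. ereal (rf zh - e/16) < F k (X k + (1/2) *\<^sub>R (Y k - X k))) sequentially"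
    by (rule epi_lbe[OF epi Zlim[OF Xl Yl]]) (use f_eq[OF fzh(1)] e in \<open>simp add: zh_def\<close>)
  have e2: "eventually (\<lambda>k. ereal (rf z2 - e/16) < F k (X k + 2 *\<^sub>R (Y k - X k))) sequentially"
    by (rule epi_lbe[OF epi Zlim[OF Xl Yl]]) (use f_eq[OF fzh(2)] e in \<open>simp add: z2_def\<close>)
  have e3: "eventually (\<lambda>k. dist (a k) (rf x) < e/16) sequentially" using tendstoD[OF al, of "e/16"] e by simp
  have e4: "eventually (\<lambda>k. dist (b k) (rf y) < e/16) sequentially" using tendstoD[OF bl, of "e/16"] e by simp
  show "eventually (\<lambda>k. dist (Q k (Y k - X k)) (K x y) < e) sequentially"
    using e1 e2 e3 e4 line_ev[OF X Y]
  proof eventually_elim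
    case (elim k)
    from elim(5) have h1: "F k (X k + (1/2) *\<^sub>R (Y k - X k)) = ereal ((1/2) * a k + (1/2) * b k - (1/4) * Q k (Y k - X k))"
      by (auto simp: algebra_simps)
    from elim(5) have h2: "F k (X k + 2 *\<^sub>R (Y k - X k)) = ereal (- a k + 2 * b k + 2 * Q k (Y k - X k))"
      by (auto simp: algebra_simps)
    have i1: "rf zh - e/16 < (1/2) * a k + (1/2) * b k - (1/4) * Q k (Y k - X k)" using elim(1) h1 by simp
    have i2: "rf z2 - e/16 < - a k + 2 * b k + 2 * Q k (Y k - X k)" using elim(2) h2 by simp
    have a1: "\<bar>a k - rf x\<bar> < e/16" "\<bar>b k - rf y\<bar> < e/16" using elim(3,4) by (simp_all add: dist_real_def)
    have "Q k (Y k - X k) - K x y < e" "K x y - Q k (Y k - X k) < e"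
      using i1 i2 a1 rzh rz2 e by arith+
    then show ?case by (simp add: dist_real_def abs_less_iff)
  qed
qed

lemma rec_comb:
  assumes X: "isrec X x a" and Y: "isrec Y y b"
  shows "isrec (\<lambda>k. X k + t *\<^sub>R (Y k - X k)) (x + t *\<^sub>R (y - x))
           (\<lambda>k. (1-t) * a k + t * b k + (t * t - t) * Q k (Y k - X k))"
proof -
  have fx: "f x \<noteq> \<infinity>" and fy: "f y \<noteq> \<infinity>" using X Y by (auto simp: isrec_def)
  have Xl: "X \<longlonglongrightarrow> x" and Yl: "Y \<longlonglongrightarrow> y" and al: "a \<longlonglongrightarrow> rf x" and bl: "b \<longlonglongrightarrow> rf y"
    using X Y by (auto simp: isrec_def)
  have "(\<lambda>k. (1-t) * a k + t * b k + (t * t - t) * Q k (Y k - X k)) \<longlonglongrightarrow> (1-t) * rf x + t * rf y + (t * t - t) * K x y"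
    using al bl kappa_conv[OF X Y] by (intro tendsto_add tendsto_mult tendsto_const)
  then show ?thesis unfolding isrec_def
    using Zlim[OF Xl Yl] line_quad[OF fx fy, of t] dom_affine[OF fx fy, of t] line_ev[OF X Y]
    by (auto elim: eventually_mono)
qed

lemma K_nonneg:
  assumes "f x \<noteq> \<infinity>" "f y \<noteq> \<infinity>"
  shows "0 \<le> K x y"
proof -
  obtain X a where X: "isrec X x a" using rec_ex assms by blast
  obtain Y b where Y: "isrec Y y b" using rec_ex assms by blast
  show ?thesis using kappa_conv[OF X Y] by (rule tendsto_lowerbound) (auto simp: Q_nn)
qed

lemma K_shift:
  assumes fx: "f x \<noteq> \<infinity>" and fy: "f y \<noteq> \<infinity>" and fx': "f x' \<noteq> \<infinity>"
  shows "K x' (x' + (y - x)) = K x y"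
proof -
  obtain X a where X: "isrec X x a" using rec_ex fx by blast
  obtain Y b where Y: "isrec Y y b" using rec_ex fy by blast
  obtain X' a' where X': "isrec X' x' a'" using rec_ex fx' by blast
  define M where "M k = X' k + (1/2) *\<^sub>R (Y k - X' k)" for k
  obtain cm where Mr: "isrec M (x' + (1/2) *\<^sub>R (y - x')) cm"
    using rec_comb[OF X' Y, of "1/2"] unfolding M_def by blast
  obtain cy where Yr: "isrec (\<lambda>k. X k + 2 *\<^sub>R (M k - X k)) (x + 2 *\<^sub>R ((x' + (1/2) *\<^sub>R (y - x')) - x)) cy"
    using rec_comb[OF X Mr, of 2] by blast
  have e1: "x + 2 *\<^sub>R ((x' + (1/2) *\<^sub>R (y - x')) - x) = x' + (y - x)" by (simp add: algebra_simps scaleR_2)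
  have e2: "(X k + 2 *\<^sub>R (M k - X k)) - X' k = Y k - X k" for k unfolding M_def by (simp add: algebra_simps scaleR_2)
  have "(\<lambda>k. Q k (Y k - X k)) \<longlonglongrightarrow> K x' (x' + (y - x))"
    using kappa_conv[OF X' Yr] unfolding e1 e2 .
  moreover have "(\<lambda>k. Q k (Y k - X k)) \<longlonglongrightarrow> K x y" by (rule kappa_conv[OF X Y])
  ultimately show ?thesis by (rule LIMSEQ_unique)
qed

lemma K_sym:
  assumes fx: "f x \<noteq> \<infinity>" and fy: "f y \<noteq> \<infinity>"
  shows "K y x = K x y"
proof -
  have "rf (x + (-1) *\<^sub>R (y - x)) = 2 * rf x - rf y + 2 * K x y"
    using line_quad[OF fx fy, of "-1"] by simp
  moreover have "y + 2 *\<^sub>R (x - y) = x + (-1) *\<^sub>R (y - x)" by (simp add: algebra_simps scaleR_2)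
  ultimately show ?thesis unfolding K_def by simp
qed

end

locale epi_gq_p = epi_gq F Q f for F :: "nat \<Rightarrow> 'a::real_normed_vector \<Rightarrow> ereal" and Q f +
  fixes p :: 'a
  assumes fp: "f p \<noteq> \<infinity>"
begin

definition Vs :: "'a set" where "Vs = {h. f (p + h) \<noteq> \<infinity>}"
definition g :: "'a \<Rightarrow> real" where "g h = rf (p + h)"
definition Q0 :: "'a \<Rightarrow> real" where "Q0 h = K p (p + h)"
definition \<beta> :: "'a \<Rightarrow> 'a \<Rightarrow> real" where "\<beta> u v = (Q0 (u + v) - Q0 (v - u)) / 2"
definition L :: "'a \<Rightarrow> real" where "L h = g h - g 0 - Q0 h"

lemma V0: "0 \<in> Vs" using fp by (simp add: Vs_def)

lemma V_scale: "h \<in> Vs \<Longrightarrow> t *\<^sub>R h \<in> Vs"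
  using dom_affine[OF fp, of "p + h" t] by (simp add: Vs_def)

lemma V_add: assumes "h \<in> Vs" "k \<in> Vs" shows "h + k \<in> Vs"
proof -
  define M where "M = p + h + (1/2) *\<^sub>R ((p + k) - (p + h))"
  have m: "f M \<noteq> \<infinity>"
    unfolding M_def using dom_affine[of "p + h" "p + k" "1/2"] assms by (simp add: Vs_def)
  have "f (p + 2 *\<^sub>R (M - p)) \<noteq> \<infinity>" using dom_affine[OF fp m] .
  moreover have "p + 2 *\<^sub>R (M - p) = p + (h + k)"
    unfolding M_def by (simp add: algebra_simps scaleR_2)
  ultimately show ?thesis by (simp add: Vs_def)
qed

lemma V_neg: "h \<in> Vs \<Longrightarrow> - h \<in> Vs" using V_scale[of h "-1"] by simp
lemma V_diff: "h \<in> Vs \<Longrightarrow> k \<in> Vs \<Longrightarrow> h - k \<in> Vs" using V_add[of h "-k"] V_neg by simp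

lemma LQ:
  assumes x: "x \<in> Vs" and d: "d \<in> Vs"
  shows "g (x + t *\<^sub>R d) = (1-t) * g x + t * g (x + d) + (t * t - t) * Q0 d"
proof -
  have fx: "f (p + x) \<noteq> \<infinity>" and fxd: "f (p + x + d) \<noteq> \<infinity>" and fd: "f (p + d) \<noteq> \<infinity>"
    using x d V_add[OF x d] by (auto simp: Vs_def add.assoc)
  have "rf (p + x + t *\<^sub>R ((p + x + d) - (p + x))) = (1-t) * rf (p + x) + t * rf (p + x + d) + (t * t - t) * K (p + x) (p + x + d)"
    by (rule line_quad[OF fx fxd])
  moreover have "K (p + x) (p + x + d) = K p (p + d)"
    using K_shift[OF fp fd fx] by (simp add: add.assoc)
  ultimately show ?thesis unfolding g_def Q0_def by (simp add: add.assoc)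
qed

lemma Q0_nn: "d \<in> Vs \<Longrightarrow> 0 \<le> Q0 d"
  unfolding Q0_def using K_nonneg[OF fp] by (simp add: Vs_def)

lemma Q0_neg: assumes d: "d \<in> Vs" shows "Q0 (- d) = Q0 d"
proof -
  have fd: "f (p + d) \<noteq> \<infinity>" "f (p - d) \<noteq> \<infinity>" using d V_neg[OF d] by (auto simp: Vs_def)
  have "K p (p + (p - (p - d))) = K (p - d) p" by (rule K_shift[OF fd(2) fp fp])
  moreover have "K (p - d) p = K p (p - d)" by (rule K_sym[OF fp fd(2)])
  ultimately show ?thesis unfolding Q0_def by simp
qed

lemma beta_eq:
  assumes x: "x \<in> Vs" and u: "u \<in> Vs" and v: "v \<in> Vs"
  shows "g (x + u + v) - g (x + u) - g (x + v) + g x = \<beta> u v"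
proof -
  have xu: "x + u \<in> Vs" and uv: "u + v \<in> Vs" and vu: "v - u \<in> Vs" using V_add V_diff x u v by auto
  have ev1: "(x + u) + (1/2) *\<^sub>R (v - u) = x + (1/2) *\<^sub>R (u + v)"
  proof -
    have "u = (1/2) *\<^sub>R u + (1/2) *\<^sub>R u" by (simp flip: scaleR_add_left)
    then show ?thesis by (metis (no_types, lifting) add.assoc add_diff_cancel_left' diff_add_cancel scaleR_right_diff_distrib scaleR_add_right)
  qed
  have ev2: "(x + u) + (v - u) = x + v" by simp
  have A: "g (x + (1/2) *\<^sub>R (u + v)) = (1 - 1/2) * g x + (1/2) * g (x + (u + v)) + ((1/2) * (1/2) - 1/2) * Q0 (u + v)"
    by (rule LQ[OF x uv])
  have B: "g (x + (1/2) *\<^sub>R (u + v)) = (1 - 1/2) * g (x + u) + (1/2) * g (x + v) + ((1/2) * (1/2) - 1/2) * Q0 (v - u)"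
    using LQ[OF xu vu, of "1/2"] unfolding ev1 ev2 .
  have C: "g (x + (u + v)) = g (x + u + v)" by (simp add: add.assoc)
  have A': "g (x + (1/2) *\<^sub>R (u + v)) = g x / 2 + g (x + u + v) / 2 - Q0 (u + v) / 4" using A C by simp
  have B': "g (x + (1/2) *\<^sub>R (u + v)) = g (x + u) / 2 + g (x + v) / 2 - Q0 (v - u) / 4" using B by simp
  from A' B' have "g x / 2 + g (x + u + v) / 2 - Q0 (u + v) / 4 = g (x + u) / 2 + g (x + v) / 2 - Q0 (v - u) / 4" by simp
  then show ?thesis unfolding \<beta>_def by (simp add: field_simps)
qed

lemma beta0: "u \<in> Vs \<Longrightarrow> v \<in> Vs \<Longrightarrow> \<beta> u v = g (u + v) - g u - g v + g 0"
  using beta_eq[OF V0, of u v] by simp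

lemma beta_sym: "u \<in> Vs \<Longrightarrow> v \<in> Vs \<Longrightarrow> \<beta> u v = \<beta> v u"
  using beta0 by (simp add: add.commute)

lemma beta_add2:
  assumes u: "u \<in> Vs" and v1: "v1 \<in> Vs" and v2: "v2 \<in> Vs"
  shows "\<beta> u (v1 + v2) = \<beta> u v1 + \<beta> u v2"
proof -
  have "g (v1 + u + v2) - g (v1 + u) - g (v1 + v2) + g v1 = \<beta> u v2" by (rule beta_eq[OF v1 u v2])
  moreover have "g (v1 + u + v2) = g (u + (v1 + v2))" "g (v1 + u) = g (u + v1)" by (simp_all add: add_ac)
  ultimately show ?thesis using beta0[OF u v1] beta0[OF u v2] beta0[OF u V_add[OF v1 v2]] by linarith
qed

lemma beta_scale2:
  assumes u: "u \<in> Vs" and v: "v \<in> Vs"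
  shows "\<beta> u (t *\<^sub>R v) = t * \<beta> u v"
proof -
  have e1: "g (u + t *\<^sub>R v) = (1-t) * g u + t * g (u + v) + (t * t - t) * Q0 v" by (rule LQ[OF u v])
  have e2: "g (t *\<^sub>R v) = (1-t) * g 0 + t * g v + (t * t - t) * Q0 v" using LQ[OF V0 v, of t] by simp
  have "\<beta> u (t *\<^sub>R v) - t * \<beta> u v = 0"
    unfolding beta0[OF u V_scale[OF v]] beta0[OF u v] e1 e2 by (simp add: algebra_simps)
  then show ?thesis by simp
qed

lemma beta_add1: "u1 \<in> Vs \<Longrightarrow> u2 \<in> Vs \<Longrightarrow> v \<in> Vs \<Longrightarrow> \<beta> (u1 + u2) v = \<beta> u1 v + \<beta> u2 v"
  using beta_sym beta_add2 V_add by metis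

lemma beta_scale1: "u \<in> Vs \<Longrightarrow> v \<in> Vs \<Longrightarrow> \<beta> (t *\<^sub>R u) v = t * \<beta> u v"
  using beta_sym beta_scale2 V_scale by metis

lemma beta_diag: assumes h: "h \<in> Vs" shows "\<beta> h h = 2 * Q0 h"
proof -
  have "g (0 + 2 *\<^sub>R h) = (1-2) * g 0 + 2 * g (0 + h) + (2 * 2 - 2) * Q0 h" by (rule LQ[OF V0 h])
  moreover have "h + h = 2 *\<^sub>R h" by (simp add: scaleR_2)
  ultimately show ?thesis using beta0[OF h h] by simp
qed

lemma beta_psd: "h \<in> Vs \<Longrightarrow> 0 \<le> \<beta> h h" using beta_diag Q0_nn by simp

lemma L_add: assumes h: "h \<in> Vs" and k: "k \<in> Vs" shows "L (h + k) = L h + L k"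
proof -
  have hk: "h + k \<in> Vs" using V_add h k by auto
  have "\<beta> (h + k) (h + k) = \<beta> h h + \<beta> h k + \<beta> k h + \<beta> k k"
    using beta_add1[OF h k hk] beta_add2[OF h h k] beta_add2[OF k h k] by simp
  then have "2 * Q0 (h + k) = 2 * Q0 h + 2 * \<beta> h k + 2 * Q0 k"
    using beta_diag h k hk beta_sym[OF h k] by simp
  then show ?thesis unfolding L_def using beta0[OF h k] by simp
qed

lemma L_scale: assumes h: "h \<in> Vs" shows "L (t *\<^sub>R h) = t * L h"
proof -
  have "g (0 + t *\<^sub>R h) = (1-t) * g 0 + t * g (0 + h) + (t * t - t) * Q0 h" by (rule LQ[OF V0 h])
  moreover have "\<beta> (t *\<^sub>R h) (t *\<^sub>R h) = t * t * \<beta> h h"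
    using beta_scale1[OF h V_scale[OF h]] beta_scale2[OF h h] by simp
  ultimately show ?thesis unfolding L_def using beta_diag h V_scale[OF h] by (simp add: algebra_simps)
qed

lemma g_repr: "h \<in> Vs \<Longrightarrow> g h = g 0 + L h + \<beta> h h / 2"
  unfolding L_def using beta_diag by simp

end

lemma proj_exists:
  fixes V :: "'a::euclidean_space set"
  assumes V: "subspace V"
  shows "\<exists>P R. \<forall>x. P x \<in> V \<and> (\<forall>w\<in>V. inner (R x) w = 0) \<and> P x + R x = x"
proof -
  have "\<forall>x. \<exists>y z. y \<in> V \<and> (\<forall>w\<in>V. inner z w = 0) \<and> y + z = x"
  proof
    fix x
    obtain y z where "y \<in> span V" "\<And>w. w \<in> span V \<Longrightarrow> orthogonal z w" "x = y + z"
      using orthogonal_subspace_decomp_exists[of V x] by blast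
    moreover have "span V = V" using V by simp
    ultimately show "\<exists>y z. y \<in> V \<and> (\<forall>w\<in>V. inner z w = 0) \<and> y + z = x"
      by (auto simp: orthogonal_def)
  qed
  then show ?thesis by metis
qed

lemma decomp_unique:
  fixes V :: "'a::euclidean_space set"
  assumes V: "subspace V" and a: "a1 \<in> V" "a2 \<in> V"
    and b: "\<forall>w\<in>V. inner b1 w = 0" "\<forall>w\<in>V. inner b2 w = 0" and eq: "a1 + b1 = a2 + b2"
  shows "a1 = a2"
proof -
  have d: "a1 - a2 \<in> V" using V a by (simp add: subspace_diff)
  have "a1 - a2 = b2 - b1" using eq by (simp add: algebra_simps)
  then have "inner (a1 - a2) (a1 - a2) = inner (b2 - b1) (a1 - a2)" by simp
  also have "\<dots> = 0" using b d by (simp add: inner_diff_left)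
  finally show ?thesis by simp
qed

lemma in_subspace_if_orth:
  fixes V :: "'a::euclidean_space set"
  assumes V: "subspace V" and u: "\<And>z. (\<forall>w\<in>V. inner z w = 0) \<Longrightarrow> inner u z = 0"
  shows "u \<in> V"
proof -
  obtain P R where PR: "\<And>x. P x \<in> V \<and> (\<forall>w\<in>V. inner (R x) w = 0) \<and> P x + R x = x"
    using proj_exists[OF V] by blast
  have "inner u (R u) = 0" using u PR by blast
  moreover have "inner u (R u) = inner (P u) (R u) + inner (R u) (R u)"
    using PR[of u] by (metis inner_add_left)
  moreover have "inner (P u) (R u) = 0" using PR[of u] by (simp add: inner_commute)
  ultimately have "R u = 0" by simp
  then have "P u = u" using PR[of u] by simp
  then show ?thesis using PR[of u] by simp
qed

lemma riesz_sub:
  fixes V :: "'a::euclidean_space set"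
  assumes V: "subspace V"
    and la: "\<And>x y. x \<in> V \<Longrightarrow> y \<in> V \<Longrightarrow> l (x + y) = l x + l y"
    and ls: "\<And>x c. x \<in> V \<Longrightarrow> l (c *\<^sub>R x) = c * l x"
  shows "\<exists>y. \<forall>v\<in>V. inner y v = l v"
proof -
  obtain P R where PR: "\<And>x. P x \<in> V \<and> (\<forall>w\<in>V. inner (R x) w = 0) \<and> P x + R x = x"
    using proj_exists[OF V] by blast
  have RV: "\<forall>w\<in>V. inner (R x + R y) w = 0" "\<forall>w\<in>V. inner (c *\<^sub>R R x) w = 0" for x y c
    using PR by (auto simp: inner_add_left)
  have Padd: "P (x + y) = P x + P y" for x y
  proof (rule decomp_unique[OF V _ _ _ RV(1)[of x y]])
    have "P (x + y) + R (x + y) = x + y" using PR by blast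
    also have "\<dots> = (P x + R x) + (P y + R y)" using PR by metis
    also have "\<dots> = (P x + P y) + (R x + R y)" by (simp add: algebra_simps)
    finally show "P (x + y) + R (x + y) = P x + P y + (R x + R y)" .
    show "P (x + y) \<in> V" "P x + P y \<in> V" "\<forall>w\<in>V. inner (R (x + y)) w = 0" using PR V by (auto simp: subspace_add)
  qed
  have Psc: "P (c *\<^sub>R x) = c *\<^sub>R P x" for x c
  proof (rule decomp_unique[OF V _ _ _ RV(2)[of c x]])
    have "P (c *\<^sub>R x) + R (c *\<^sub>R x) = c *\<^sub>R x" using PR by blast
    also have "\<dots> = c *\<^sub>R (P x + R x)" using PR by metis
    finally show "P (c *\<^sub>R x) + R (c *\<^sub>R x) = c *\<^sub>R P x + c *\<^sub>R R x" by (simp add: scaleR_add_right)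
  qed (use PR V in \<open>auto simp: subspace_scale\<close>)
  have Pid: "P v = v" if "v \<in> V" for v
    using decomp_unique[OF V conjunct1[OF PR[of v]] that conjunct1[OF conjunct2[OF PR[of v]]], of 0] PR[of v] by simp
  define \<phi> where "\<phi> x = l (P x)" for x
  have lin: "linear \<phi>"
    by (rule linearI) (use PR in \<open>auto simp: \<phi>_def Padd Psc la ls\<close>)
  define y where "y = adjoint \<phi> 1"
  have "inner y v = l v" if "v \<in> V" for v
    using adjoint_works[OF lin, of v 1] that unfolding y_def \<phi>_def by (simp add: inner_commute Pid)
  then show ?thesis by blast
qed

lemma build_op:
  fixes V :: "(real^'n::finite) set" and B :: "real^'n \<Rightarrow> real^'n \<Rightarrow> real"
  assumes V: "subspace V"
   and add1: "\<And>u1 u2 v. u1 \<in> V \<Longrightarrow> u2 \<in> V \<Longrightarrow> v \<in> V \<Longrightarrow> B (u1 + u2) v = B u1 v + B u2 v"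
   and sc1: "\<And>u v c. u \<in> V \<Longrightarrow> v \<in> V \<Longrightarrow> B (c *\<^sub>R u) v = c * B u v"
   and sym: "\<And>u v. u \<in> V \<Longrightarrow> v \<in> V \<Longrightarrow> B u v = B v u"
   and psd: "\<And>h. h \<in> V \<Longrightarrow> 0 \<le> B h h"
  shows "\<exists>A0. mms_relation A0 \<and> (\<forall>h\<in>V. qA A0 h = ereal (B h h / 2)) \<and> (\<forall>h. h \<notin> V \<longrightarrow> qA A0 h = \<infinity>)"
proof -
  define A0 where "A0 = {(x, y). x \<in> V \<and> (\<forall>v\<in>V. inner y v = B x v)}"
  have B0: "v \<in> V \<Longrightarrow> B 0 v = 0" for v using sc1[of 0 v 0] V by (simp add: subspace_0)
  have Bdiff: "B (x - y) w = B x w - B y w" if "x \<in> V" "y \<in> V" "w \<in> V" for x y w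
  proof -
    have m: "(-1) *\<^sub>R y \<in> V" by (rule subspace_scale[OF V that(2)])
    have "B (x + (-1) *\<^sub>R y) w = B x w + B ((-1) *\<^sub>R y) w" by (rule add1[OF that(1) m that(3)])
    moreover have "B ((-1) *\<^sub>R y) w = (-1) * B y w" by (rule sc1[OF that(2,3)])
    moreover have "x + (-1) *\<^sub>R y = x - y" by simp
    ultimately show ?thesis by simp
  qed
  have ex: "\<exists>y. (x, y) \<in> A0" if x: "x \<in> V" for x
  proof -
    have "\<exists>y. \<forall>v\<in>V. inner y v = B x v"
    proof (rule riesz_sub[OF V])
      show "B x (a + b) = B x a + B x b" if "a \<in> V" "b \<in> V" for a b
        using that x sym add1 V by (simp add: subspace_add)
      show "B x (c *\<^sub>R a) = c * B x a" if "a \<in> V" for a c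
        using that x sym sc1 V by (simp add: subspace_scale)
    qed
    then show ?thesis using x by (auto simp: A0_def)
  qed
  have sub: "subspace A0"
    unfolding subspace_def
  proof (intro conjI ballI allI)
    show "0 \<in> A0" using V B0 by (auto simp: A0_def zero_prod_def subspace_0)
  next
    fix p q assume "p \<in> A0" "q \<in> A0"
    then show "p + q \<in> A0" using V add1 by (auto simp: A0_def subspace_add inner_add_left)
  next
    fix c :: real and p assume "p \<in> A0"
    then show "c *\<^sub>R p \<in> A0" using V sc1 by (auto simp: A0_def subspace_scale)
  qed
  have symm: "symmetric_op A0"
    unfolding symmetric_op_def A0_def using sym by (auto simp: inner_commute)
  have mono: "monotone_op A0"
    unfolding monotone_op_def
  proof (intro allI impI)
    fix x x' y y' assume a: "(x, x') \<in> A0" "(y, y') \<in> A0"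
    then have xy: "x \<in> V" "y \<in> V" "x - y \<in> V" using V by (auto simp: A0_def subspace_diff)
    have "inner (x - y) (x' - y') = inner x' (x - y) - inner y' (x - y)"
      by (simp add: inner_diff_left inner_diff_right inner_commute)
    also have "\<dots> = B x (x - y) - B y (x - y)" using a xy by (auto simp: A0_def)
    also have "\<dots> = B (x - y) (x - y)" using Bdiff xy by simp
    finally show "0 \<le> inner (x - y) (x' - y')" using psd xy by simp
  qed
  have maxi: "C = A0" if C: "monotone_op C" "A0 \<subseteq> C" for C
  proof
    show "C \<subseteq> A0"
    proof
      fix q assume "q \<in> C"
      then obtain u w where q: "q = (u, w)" "(u, w) \<in> C" by (cases q) auto
      have uV: "u \<in> V"
      proof (rule in_subspace_if_orth[OF V])
        fix z assume z: "\<forall>w\<in>V. inner z w = 0"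
        show "inner u z = 0"
        proof (rule ccontr)
          assume nz: "inner u z \<noteq> 0"
          define t where "t = (inner u w + 1) / inner u z"
          have "(0, t *\<^sub>R z) \<in> A0" using z V B0 by (auto simp: A0_def subspace_0)
          then have "0 \<le> inner (u - 0) (w - t *\<^sub>R z)" using C q unfolding monotone_op_def by blast
          moreover have "inner (u - 0) (w - t *\<^sub>R z) = -1"
            using nz by (simp add: t_def inner_diff_right)
          ultimately show False by simp
        qed
      qed
      obtain yu where yu: "(u, yu) \<in> A0" using ex uV by blast
      have "inner w v = B u v" if v: "v \<in> V" for v
      proof -
        obtain yv where yv: "(v, yv) \<in> A0" using ex v by blast
        have c0: "0 \<le> inner v yv" using yv v by (auto simp: A0_def inner_commute psd)
        define a where "a = inner v (w - yu)"
        have "a = 0"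
        proof (rule ccontr)
          assume an: "a \<noteq> 0"
          define t where "t = a / (inner v yv + 1)"
          have "t *\<^sub>R (v, yv) \<in> A0" by (rule subspace_scale[OF sub yv])
          then have "(u, yu) + t *\<^sub>R (v, yv) \<in> A0" by (rule subspace_add[OF sub yu])
          then have "(u + t *\<^sub>R v, yu + t *\<^sub>R yv) \<in> C" using C by auto
          then have "0 \<le> inner (u - (u + t *\<^sub>R v)) (w - (yu + t *\<^sub>R yv))" using C q unfolding monotone_op_def by blast
          moreover have "inner (u - (u + t *\<^sub>R v)) (w - (yu + t *\<^sub>R yv)) = - t * a + t * t * inner v yv"
            by (simp add: a_def inner_diff_right inner_add_right algebra_simps)
          moreover have "t * inner v yv - a = - t"
            using c0 by (simp add: t_def field_simps)
          moreover have "t \<noteq> 0" using an c0 by (simp add: t_def)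
          moreover have "- t * a + t * t * inner v yv = t * (t * inner v yv - a)" by (simp add: algebra_simps)
          ultimately have "0 \<le> t * (- t)" by metis
          then have "0 \<le> - (t * t)" by simp
          moreover have "t * t > 0" using \<open>t \<noteq> 0\<close> by (metis not_real_square_gt_zero)
          ultimately show False by simp
        qed
        then have "inner v w = inner v yu" by (simp add: a_def inner_diff_right)
        then show ?thesis using yu v by (auto simp: A0_def inner_commute)
      qed
      then show "q \<in> A0" using q uV by (auto simp: A0_def)
    qed
  qed (use C in auto)
  have mms: "mms_relation A0"
    unfolding mms_relation_def linear_relation_def maximally_monotone_def
    using sub symm mono maxi by blast
  have dom: "Domain A0 = V" using ex by (auto simp: A0_def)
  have qv: "qA A0 h = ereal (B h h / 2)" if h: "h \<in> V" for h
  proof -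
    have "\<exists>y. (h, y) \<in> A0" using ex h by blast
    then have s: "(h, SOME y. (h, y) \<in> A0) \<in> A0" by (rule someI_ex)
    have "inner h (SOME y. (h, y) \<in> A0) = B h h" using s h by (auto simp: A0_def inner_commute)
    then show ?thesis using h dom by (simp add: qA_def)
  qed
  have qi: "qA A0 h = \<infinity>" if "h \<notin> V" for h using that dom by (simp add: qA_def)
  show ?thesis using mms qv qi by blast
qed

lemma qA_val:
  fixes A :: "((real^'n::finite) \<times> (real^'n)) set"
  assumes sub: "subspace A" and sym: "symmetric_op A" and xy: "(x, y) \<in> A"
  shows "qA A x = ereal (inner x y / 2)"
proof -
  have "\<exists>y. (x, y) \<in> A" using xy by blast
  then have s: "(x, SOME y. (x, y) \<in> A) \<in> A" by (rule someI_ex)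
  define y' where "y' = (SOME y. (x, y) \<in> A)"
  have "(x, y) - (x, y') \<in> A" using subspace_diff[OF sub xy s[folded y'_def]] .
  then have d: "(0, y - y') \<in> A" by simp
  have "inner x (y - y') = inner 0 y'" using sym s[folded y'_def] d unfolding symmetric_op_def by blast
  then have "inner x y = inner x y'" by (simp add: inner_diff_right)
  then show ?thesis using xy by (auto simp: qA_def y'_def[symmetric])
qed

lemma qA_inf: "x \<notin> Domain A \<Longrightarrow> qA A x = \<infinity>" by (simp add: qA_def)

lemma gqf_concrete:
  fixes A :: "((real^'n::finite) \<times> (real^'n)) set"
  assumes mms: "mms_relation A"
  shows "gqf (\<lambda>x. qA A (x - a) + ereal (inner b x) + ereal c) (\<lambda>d. real_of_ereal (qA A d))"
proof -
  have sub: "subspace A" and sym: "symmetric_op A" and mon: "monotone_op A"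
    using mms by (auto simp: mms_relation_def linear_relation_def maximally_monotone_def)
  have qnm: "qA A x \<noteq> -\<infinity>" for x by (simp add: qA_def)
  have qnn: "0 \<le> real_of_ereal (qA A d)" for d
  proof (cases "d \<in> Domain A")
    case True
    then obtain d' where dd: "(d, d') \<in> A" by auto
    have "(0, 0) \<in> A" using subspace_0[OF sub] by (simp add: zero_prod_def)
    then have "0 \<le> inner (d - 0) (d' - 0)" using mon dd unfolding monotone_op_def by blast
    then show ?thesis using qA_val[OF sub sym dd] by simp
  next
    case False then show ?thesis by (simp add: qA_def)
  qed
  have iden: "qA A (X + s *\<^sub>R (Y - X) - a) + ereal (inner b (X + s *\<^sub>R (Y - X))) + ereal c =
      ereal ((1-s) * real_of_ereal (qA A (X - a) + ereal (inner b X) + ereal c)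
        + s * real_of_ereal (qA A (Y - a) + ereal (inner b Y) + ereal c)
        + (s * s - s) * real_of_ereal (qA A (Y - X)))"
    if X: "qA A (X - a) + ereal (inner b X) + ereal c \<noteq> \<infinity>" and Y: "qA A (Y - a) + ereal (inner b Y) + ereal c \<noteq> \<infinity>" for X Y s
  proof -
    have "X - a \<in> Domain A" using X by (auto simp: qA_def split: if_splits)
    then obtain x' where xa: "(X - a, x') \<in> A" by auto
    have "Y - a \<in> Domain A" using Y by (auto simp: qA_def split: if_splits)
    then obtain y' where ya: "(Y - a, y') \<in> A" by auto
    define d where "d = Y - X"
    define d' where "d' = y' - x'"
    have "(Y - a, y') - (X - a, x') \<in> A" by (rule subspace_diff[OF sub ya xa])
    then have dd: "(d, d') \<in> A" by (simp add: d_def d'_def)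
    have "(X - a, x') + s *\<^sub>R (d, d') \<in> A" by (rule subspace_add[OF sub xa subspace_scale[OF sub dd]])
    then have zz: "(X + s *\<^sub>R (Y - X) - a, x' + s *\<^sub>R d') \<in> A" by (simp add: d_def algebra_simps)
    have symm: "inner (X - a) d' = inner d x'" using sym xa dd unfolding symmetric_op_def by blast
    have bY: "inner b Y = inner b X + inner b d" by (simp add: d_def inner_diff_right)
    have Yeq: "Y - a = (X - a) + d" "y' = x' + d'" by (simp_all add: d_def d'_def)
    show ?thesis
      unfolding qA_val[OF sub sym zz] qA_val[OF sub sym xa] qA_val[OF sub sym ya] qA_val[OF sub sym dd[unfolded d_def]]
      using symm bY by (simp add: d_def[symmetric] inner_add_left inner_add_right inner_diff_left inner_diff_right algebra_simps Yeq) (simp add: field_simps)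
  qed
  show ?thesis unfolding gqf_def using qnm qnn iden by simp
qed

lemma qA_even:
  fixes A :: "((real^'n::finite) \<times> (real^'n)) set"
  assumes mms: "mms_relation A"
  shows "qA A (- x) = qA A x"
proof -
  have sub: "subspace A" and sym: "symmetric_op A"
    using mms by (auto simp: mms_relation_def linear_relation_def)
  show ?thesis
  proof (cases "x \<in> Domain A")
    case True
    then obtain y where xy: "(x, y) \<in> A" by auto
    have "(-1) *\<^sub>R (x, y) \<in> A" by (rule subspace_scale[OF sub xy])
    then have "(-x, -y) \<in> A" by simp
    then show ?thesis using qA_val[OF sub sym xy] qA_val[OF sub sym \<open>(-x, -y) \<in> A\<close>] by simp
  next
    case False
    have "- x \<notin> Domain A"
    proof
      assume "- x \<in> Domain A"
      then obtain y where "(-x, y) \<in> A" by auto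
      then have "(-1) *\<^sub>R (-x, y) \<in> A" by (rule subspace_scale[OF sub])
      then have "(x, -y) \<in> A" by simp
      with False show False by auto
    qed
    then show ?thesis using False by (simp add: qA_def)
  qed
qed

lemma epi_even:
  fixes F :: "nat \<Rightarrow> 'a::real_normed_vector \<Rightarrow> ereal"
  assumes epi: "epiconverges F f" and ev: "\<And>k x. F k (- x) = F k x" and pr: "proper_fun f"
  shows "f (- x) = f x"
proof -
  have step: "f (- z) \<le> ereal t" if "f z \<le> ereal t" for z t
  proof -
    have "(z, t) \<in> PK_liminf (\<lambda>k. epigraph (F k))"
      using epi that by (auto simp: epiconverges_def PK_converges_def epigraph_def)
    then have "(- z, t) \<in> PK_liminf (\<lambda>k. epigraph (F k))"
      unfolding PK_liminf_def
    proof (safe)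
      fix e :: real assume e: "e > 0" "\<forall>e>0. eventually (\<lambda>k. \<exists>y\<in>epigraph (F k). dist y (z, t) < e) sequentially"
      show "eventually (\<lambda>k. \<exists>y\<in>epigraph (F k). dist y (- z, t) < e) sequentially"
        using e(2)[rule_format, OF e(1)]
      proof (rule eventually_mono)
        fix k assume "\<exists>y\<in>epigraph (F k). dist y (z, t) < e"
        then obtain y s where ys: "(y, s) \<in> epigraph (F k)" "dist (y, s) (z, t) < e" by auto
        have "(- y, s) \<in> epigraph (F k)" using ys(1) ev by (simp add: epigraph_def)
        moreover have "dist (- y, s) (- z, t) = dist (y, s) (z, t)"
          by (simp add: dist_Pair_Pair dist_minus)
        ultimately show "\<exists>y\<in>epigraph (F k). dist y (- z, t) < e" using ys(2) by force
      qed
    qed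
    then show ?thesis using epi by (auto simp: epiconverges_def PK_converges_def epigraph_def)
  qed
  have le: "f (- z) \<le> f z" for z
  proof (cases "f z")
    case (real r) then show ?thesis using step[of z r] by simp
  next
    case PInf then show ?thesis by simp
  next
    case MInf then show ?thesis using pr by (simp add: proper_fun_def)
  qed
  show ?thesis using le[of x] le[of "- x"] by simp
qed

lemma repr:
  fixes F :: "nat \<Rightarrow> real^'n::finite \<Rightarrow> ereal"
  assumes loc: "epi_gq_p F Q f p" and bL: "\<forall>h\<in>epi_gq_p.Vs f p. inner b' h = epi_gq_p.L f p h"
  shows "\<exists>A0. mms_relation A0 \<and> f = (\<lambda>x. qA A0 (x - p) + ereal (inner b' x) + ereal (epi_gq_p.g f p 0 - inner b' p))"
proof -
  interpret epi_gq_p F Q f p by (rule loc)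
  have sV: "subspace Vs" unfolding subspace_def using V0 V_add V_scale by blast
  obtain A0 where A0: "mms_relation A0" "\<forall>h\<in>Vs. qA A0 h = ereal (\<beta> h h / 2)" "\<forall>h. h \<notin> Vs \<longrightarrow> qA A0 h = \<infinity>"
    using build_op[OF sV beta_add1 beta_scale1 beta_sym beta_psd] by blast
  have "f x = qA A0 (x - p) + ereal (inner b' x) + ereal (g 0 - inner b' p)" for x
  proof (cases "x - p \<in> Vs")
    case True
    then have fx: "f x \<noteq> \<infinity>" by (simp add: Vs_def)
    have "f x = ereal (g (x - p))" using f_eq[OF fx] by (simp add: g_def)
    also have "g (x - p) = g 0 + L (x - p) + \<beta> (x - p) (x - p) / 2" by (rule g_repr[OF True])
    also have "L (x - p) = inner b' x - inner b' p" using bspec[OF bL True] by (simp add: inner_diff_right)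
    finally show ?thesis using A0(2) True by simp
  next
    case False
    then have "f x = \<infinity>" by (simp add: Vs_def)
    then show ?thesis using A0(3) False by simp
  qed
  then show ?thesis using A0(1) by blast
qed

theorem proposition5p7:
  shows "(\<forall>(A :: nat \<Rightarrow> ((real^('n::finite)) \<times> (real^'n)) set) a b c f.
            (\<forall>k. mms_relation (A k)) \<and>
            epiconverges (\<lambda>k x. qA (A k) (x - a k) + ereal (inner (b k) x) + ereal (c k)) f \<and>
            proper_fun f
          \<longrightarrow> (\<exists>A0 a0 b0 c0. mms_relation A0 \<and>
                 f = (\<lambda>x. qA A0 (x - a0) + ereal (inner b0 x) + ereal c0)))
       \<and> (\<forall>(A :: nat \<Rightarrow> ((real^'n) \<times> (real^'n)) set) c f.
            (\<forall>k. mms_relation (A k)) \<and>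
            epiconverges (\<lambda>k x. qA (A k) x + ereal (c k)) f \<and>
            proper_fun f
          \<longrightarrow> (\<exists>A0 c0. mms_relation A0 \<and> f = (\<lambda>x. qA A0 x + ereal c0)))"
proof (intro conjI allI impI; elim conjE)
  fix A :: "nat \<Rightarrow> ((real^('n::finite)) \<times> (real^'n)) set" and a b c f
  assume mA: "\<forall>k. mms_relation (A k)"
    and epi: "epiconverges (\<lambda>k x. qA (A k) (x - a k) + ereal (inner (b k) x) + ereal (c k)) f"
    and pr: "proper_fun f"
  define F where "F k x = qA (A k) (x - a k) + ereal (inner (b k) x) + ereal (c k)" for k x
  define Q where "Q k d = real_of_ereal (qA (A k) d)" for k d
  have gq: "gqf (F k) (Q k)" for k
    unfolding F_def Q_def using gqf_concrete[OF mA[rule_format, of k]] by simp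
  have epi': "epiconverges F f" using epi unfolding F_def[abs_def] .
  interpret E: epi_gq F Q f by unfold_locales (use gq epi' pr in auto)
  obtain p where fp: "f p \<noteq> \<infinity>" using pr by (auto simp: proper_fun_def)
  interpret P: epi_gq_p F Q f p by unfold_locales (rule fp)
  have sV: "subspace P.Vs" unfolding subspace_def using P.V0 P.V_add P.V_scale by blast
  obtain b' where b': "\<forall>h\<in>P.Vs. inner b' h = P.L h"
    using riesz_sub[OF sV P.L_add P.L_scale] by blast
  from repr[OF P.epi_gq_p_axioms b'] show "\<exists>A0 a0 b0 c0. mms_relation A0 \<and>
                 f = (\<lambda>x. qA A0 (x - a0) + ereal (inner b0 x) + ereal c0)" by blast
next
  fix A :: "nat \<Rightarrow> ((real^('n::finite)) \<times> (real^'n)) set" and c f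
  assume mA: "\<forall>k. mms_relation (A k)"
    and epi: "epiconverges (\<lambda>k x. qA (A k) x + ereal (c k)) f"
    and pr: "proper_fun f"
  define F where "F k x = qA (A k) x + ereal (c k)" for k x
  define Q where "Q k d = real_of_ereal (qA (A k) d)" for k d
  have Feq: "F k = (\<lambda>x. qA (A k) (x - 0) + ereal (inner 0 x) + ereal (c k))" for k
    by (rule ext) (simp add: F_def)
  have gq: "gqf (F k) (Q k)" for k
    unfolding Feq Q_def by (rule gqf_concrete[OF mA[rule_format, of k]])
  have epi': "epiconverges F f" using epi unfolding F_def[abs_def] .
  interpret E: epi_gq F Q f by unfold_locales (use gq epi' pr in auto)
  have evF: "F k (- x) = F k x" for k x
  proof -
    have "qA (A k) (- x) = qA (A k) x" using qA_even mA by blast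
    then show ?thesis unfolding F_def by (simp only:)
  qed
  have ev: "f (- x) = f x" for x
    using epi_even[OF epi' evF pr] .
  obtain x0 where fx0: "f x0 \<noteq> \<infinity>" using pr by (auto simp: proper_fun_def)
  have "f (- x0) \<noteq> \<infinity>" using ev fx0 by simp
  have z: "x0 + (1/2) *\<^sub>R (- x0 - x0) = 0"
  proof -
    have "(1/2) *\<^sub>R (- x0 - x0) = (1/2) *\<^sub>R (- x0) + (1/2) *\<^sub>R (- x0)" by (simp add: scaleR_right_diff_distrib)
    also have "\<dots> = ((1/2) + (1/2)) *\<^sub>R (- x0)" by (simp only: scaleR_add_left)
    also have "\<dots> = - x0" by simp
    finally show ?thesis by simp
  qed
  from E.dom_affine[OF fx0 \<open>f (- x0) \<noteq> \<infinity>\<close>, of "1/2"] have f0: "f 0 \<noteq> \<infinity>"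
    unfolding z .
  interpret P: epi_gq_p F Q f 0 by unfold_locales (rule f0)
  have L0: "\<forall>h\<in>P.Vs. inner 0 h = P.L h"
  proof
    fix h assume h: "h \<in> P.Vs"
    have "P.L (- h) = - P.L h" using P.L_scale[OF h, of "-1"] by simp
    moreover have "P.L (- h) = P.L h"
    proof -
      have "f (0 + - h) = f (0 + h)" using ev[of h] by simp
      then have "P.g (- h) = P.g h" unfolding P.g_def E.rf_def by (simp only:)
      then show ?thesis unfolding P.L_def using P.Q0_neg[OF h] by (simp only:)
    qed
    ultimately show "inner 0 h = P.L h" by simp
  qed
  obtain c0 where c0: "c0 = P.g 0" by blast
  have R: "\<exists>A0. mms_relation A0 \<and> f = (\<lambda>x. qA A0 (x - 0) + ereal (inner 0 x) + ereal (c0 - inner (0::real^'n) 0))"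
    using repr[OF P.epi_gq_p_axioms L0] unfolding c0[symmetric] .
  then obtain A0 where A0: "mms_relation A0" and A02: "f = (\<lambda>x. qA A0 (x - 0) + ereal (inner 0 x) + ereal (c0 - inner (0::real^'n) 0))"
    by blast
  have "f = (\<lambda>x. qA A0 x + ereal c0)" by (subst A02) simp
  then show "\<exists>A0 c0. mms_relation A0 \<and> f = (\<lambda>x. qA A0 x + ereal c0)" using A0 by blast
qed


end
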